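(* For every $\alpha\in(0,1)$, every randomized online algorithm for non-clairvoyant dynamic bin packing whose expected total migrated size is at most an $\alpha$-fraction of the total size of the items has competitive ratio at least $\frac14\left\lfloor\frac{1}{4\alpha}\right\rfloor$.
   Context: Dynamic bin packing: bins have capacity $1$; items arrive online at times $a_i\ge0$ with size $s_i\in[0,1]$ and duration $d_i>0$ (only the size is revealed at arrival), present during $[a_i,a_i+d_i)$. Each item is placed on arrival into an open bin with enough remaining capacity or a new bin; a migration moves an already placed item to another bin. In the size-cost model each migration of item $i$ costs $s_i$; the total size of the items is $\sum_i s_i$. Cost = total active time $\int_0^\infty(\text{number of nonempty bins at } t)\,dt$; $\mathrm{OPT}(I)=\int_0^\infty\mathrm{OPT}_t\,dt$ with $\mathrm{OPT}_t$ the minimum number of unit bins to pack the items present at time $t$. Competitive ratio at least $\gamma$: for every $\beta<\gamma$ some instance has expected cost $>\beta\,\mathrm{OPT}$. *)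

theory Defs
  imports "HOL-Probability.Probability"
begin

type_synonym item = "real \<times> real \<times> real"

type_synonym binst = "item list"

(* Placement of one item: (initial bin chosen at arrival,
   list of migrations (time tau, target bin) in increasing time order). *)
type_synonym placement = "nat \<times> (real \<times> nat) list"

type_synonym schedule = "nat \<Rightarrow> placement"

definition arr :: "item \<Rightarrow> real" where "arr x = fst x"
definition sz :: "item \<Rightarrow> real" where "sz x = fst (snd x)"
definition dur :: "item \<Rightarrow> real" where "dur x = snd (snd x)"

definition valid_instance :: "binst \<Rightarrow> bool" where
  "valid_instance I \<longleftrightarrow>
     (\<forall>x\<in>set I. 0 \<le> arr x \<and> 0 \<le> sz x \<and> sz x \<le> 1 \<and> 0 < dur x)
     \<and> sorted (map arr I)"

definition present :: "binst \<Rightarrow> nat \<Rightarrow> real \<Rightarrow> bool" where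
  "present I i t \<longleftrightarrow> i < length I \<and> arr (I ! i) \<le> t \<and> t < arr (I ! i) + dur (I ! i)"

(* bin of item i at time t: the target of the last migration at time \<le> t,
   or the initial bin if there is none *)
definition bin_of :: "schedule \<Rightarrow> nat \<Rightarrow> real \<Rightarrow> nat" where
  "bin_of S i t = foldl (\<lambda>b m. if fst m \<le> t then snd m else b) (fst (S i)) (snd (S i))"

definition valid_schedule :: "binst \<Rightarrow> schedule \<Rightarrow> bool" where
  "valid_schedule I S \<longleftrightarrow>
     (\<forall>i < length I.
        sorted_wrt (\<lambda>m m'. fst m < fst m') (snd (S i)) \<and>
        (\<forall>m \<in> set (snd (S i)). arr (I ! i) < fst m \<and> fst m < arr (I ! i) + dur (I ! i)))
     \<and> (\<forall>t k. (\<Sum>i \<in> {i. present I i t \<and> bin_of S i t = k}. sz (I ! i)) \<le> 1)"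

definition nonempty_bins :: "binst \<Rightarrow> schedule \<Rightarrow> real \<Rightarrow> nat" where
  "nonempty_bins I S t = card ((\<lambda>i. bin_of S i t) ` {i. present I i t})"

definition cost :: "binst \<Rightarrow> schedule \<Rightarrow> ennreal" where
  "cost I S = (\<integral>\<^sup>+ t. ennreal (real (nonempty_bins I S t)) \<partial>lborel)"

definition migration_cost :: "binst \<Rightarrow> schedule \<Rightarrow> real" where
  "migration_cost I S = (\<Sum>i < length I. sz (I ! i) * real (length (snd (S i))))"

definition total_size :: "binst \<Rightarrow> real" where
  "total_size I = (\<Sum>i < length I. sz (I ! i))"

definition opt_at :: "binst \<Rightarrow> real \<Rightarrow> nat" where
  "opt_at I t = (LEAST k. \<exists>f :: nat \<Rightarrow> nat.
      (\<forall>i. present I i t \<longrightarrow> f i < k) \<and>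
      (\<forall>j < k. (\<Sum>i \<in> {i. present I i t \<and> f i = j}. sz (I ! i)) \<le> 1))"

definition OPT :: "binst \<Rightarrow> ennreal" where
  "OPT I = (\<integral>\<^sup>+ t. ennreal (real (opt_at I t)) \<partial>lborel)"

(* what a non-clairvoyant online algorithm knows at time t: the items that
   have arrived by t (arrival time, size), and for each whether and when it
   has departed by time t *)
definition view :: "binst \<Rightarrow> real \<Rightarrow> (real \<times> real \<times> real option) list" where
  "view I t = map (\<lambda>x. (arr x, sz x,
                         if arr x + dur x \<le> t then Some (arr x + dur x) else None))
                  (filter (\<lambda>x. arr x \<le> t) I)"

(* deterministic non-clairvoyant online algorithm: its decisions up to time t
   depend only on the view at time t *)
definition online :: "(binst \<Rightarrow> schedule) \<Rightarrow> bool" where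
  "online A \<longleftrightarrow> (\<forall>I J t. valid_instance I \<and> valid_instance J \<and> view I t = view J t \<longrightarrow>
      (\<forall>i < length (view I t).
         fst (A I i) = fst (A J i) \<and>
         filter (\<lambda>m. fst m \<le> t) (snd (A I i)) = filter (\<lambda>m. fst m \<le> t) (snd (A J i))))"

(* randomized algorithm = random choice (according to prob. space M) of a
   deterministic online algorithm producing feasible schedules *)
definition randomized_alg :: "'w measure \<Rightarrow> ('w \<Rightarrow> binst \<Rightarrow> schedule) \<Rightarrow> bool" where
  "randomized_alg M A \<longleftrightarrow> prob_space M \<and>
     (\<forall>\<omega> \<in> space M. online (A \<omega> ) \<and>
        (\<forall>I. valid_instance I \<longrightarrow> valid_schedule I (A \<omega> I))) \<and>
     (\<forall>I. valid_instance I \<longrightarrow>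
        (\<lambda>\<omega>. cost I (A \<omega> I)) \<in> borel_measurable M \<and>
        (\<lambda>\<omega>. ennreal (migration_cost I (A \<omega> I))) \<in> borel_measurable M)"

definition exp_cost :: "'w measure \<Rightarrow> ('w \<Rightarrow> binst \<Rightarrow> schedule) \<Rightarrow> binst \<Rightarrow> ennreal" where
  "exp_cost M A I = (\<integral>\<^sup>+ \<omega>. cost I (A \<omega> I) \<partial>M)"

definition exp_migration :: "'w measure \<Rightarrow> ('w \<Rightarrow> binst \<Rightarrow> schedule) \<Rightarrow> binst \<Rightarrow> ennreal" where
  "exp_migration M A I = (\<integral>\<^sup>+ \<omega>. ennreal (migration_cost I (A \<omega> I)) \<partial>M)"

end

theory Submission
  imports Defs
begin


definition inst :: "nat \<Rightarrow> nat \<Rightarrow> real \<Rightarrow> nat set \<Rightarrow> binst" where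
 "inst K N T S = map (\<lambda>i. (0, 1 / real K, if i \<in> S then T else 1)) [0..<N]"

lemma length_inst[simp]: "length (inst K N T S) = N"
  by (simp add: inst_def)

lemma nth_inst: "i < N \<Longrightarrow> inst K N T S ! i = (0, 1 / real K, if i \<in> S then T else 1)"
  by (simp add: inst_def)

lemma arr_inst[simp]: "i < N \<Longrightarrow> arr (inst K N T S ! i) = 0"
  by (simp add: nth_inst arr_def)
lemma sz_inst[simp]: "i < N \<Longrightarrow> sz (inst K N T S ! i) = 1 / real K"
  by (simp add: nth_inst sz_def)
lemma dur_inst[simp]: "i < N \<Longrightarrow> dur (inst K N T S ! i) = (if i \<in> S then T else 1)"
  by (simp add: nth_inst dur_def)

lemma inv_le1[simp]: "1 / real K \<le> 1"
  by (cases K) auto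

lemma valid_inst: "T > 0 \<Longrightarrow> valid_instance (inst K N T S)"
  unfolding valid_instance_def
proof
  assume T: "T > 0"
  show "\<forall>x\<in>set (inst K N T S). 0 \<le> arr x \<and> 0 \<le> sz x \<and> sz x \<le> 1 \<and> 0 < dur x"
    using T by (auto simp: inst_def arr_def sz_def dur_def)
  show "sorted (map arr (inst K N T S))"
    by (simp add: inst_def arr_def sorted_iff_nth_mono)
qed

lemma present_inst: "present (inst K N T S) i t \<longleftrightarrow> i < N \<and> 0 \<le> t \<and> t < (if i \<in> S then T else 1)"
  by (auto simp: present_def)

lemma present_set_mid: "S \<subseteq> {..<N} \<Longrightarrow> 1 \<le> t \<Longrightarrow> t < T \<Longrightarrow> {i. present (inst K N T S) i t} = S"
  by (auto simp: present_inst)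

lemma foldl_keep: "(\<forall>m\<in>set ms. \<not> fst m \<le> t) \<Longrightarrow> foldl (\<lambda>b m. if fst m \<le> t then snd m else b) b0 ms = b0"
  by (induction ms arbitrary: b0) auto

lemma view0: "T > 0 \<Longrightarrow> view (inst K N T S) 0 = map (\<lambda>i. (0, 1 / real K, None)) [0..<N]"
  by (auto simp: view_def inst_def arr_def sz_def dur_def)

lemma opt_le:
  assumes "(\<forall>i. present I i t \<longrightarrow> f i < k) \<and>
      (\<forall>j < k. (\<Sum>i \<in> {i. present I i t \<and> f i = j}. sz (I ! i)) \<le> 1)"
  shows "opt_at I t \<le> k"
  unfolding opt_at_def by (rule Least_le) (use assms in blast)

lemma opt_at_inst:
  assumes K: "K \<ge> 1" and S: "S \<subseteq> {..<N}" "card S = K" and T: "T > 1"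
  shows "opt_at (inst K N T S) t \<le> (if 0 \<le> t \<and> t < 1 then N else if 1 \<le> t \<and> t < T then 1 else 0)"
proof -
  let ?I = "inst K N T S"
  consider (a) "0 \<le> t \<and> t < 1" | (b) "1 \<le> t \<and> t < T" | (c) "t < 0 \<or> T \<le> t" by linarith
  then show ?thesis
  proof cases
    case a
    have "opt_at ?I t \<le> N"
    proof (rule opt_le[where f = "\<lambda>i. i"], intro conjI allI impI)
      fix i assume "present ?I i t" then show "i < N" by (simp add: present_inst)
    next
      fix j assume "j < N"
      show "(\<Sum>i \<in> {i. present ?I i t \<and> i = j}. sz (?I ! i)) \<le> 1"
      proof (cases "present ?I j t")
        case True
        then have "{i. present ?I i t \<and> i = j} = {j}" by auto
        then show ?thesis using \<open>j < N\<close> by simp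
      next
        case False
        then have e: "{i. present ?I i t \<and> i = j} = {}" by auto
        show ?thesis unfolding e by simp
      qed
    qed
    then show ?thesis using a by simp
  next
    case b
    have "opt_at ?I t \<le> 1"
    proof (rule opt_le[where f = "\<lambda>i. 0"], intro conjI allI impI)
      fix i assume "present ?I i t" then show "(0::nat) < 1" by simp
    next
      fix j :: nat assume "j < 1"
      have e: "{i. present ?I i t \<and> (0::nat) = j} = S" using present_set_mid[OF S(1)] b \<open>j < 1\<close> by auto
      have "(\<Sum>i \<in> S. sz (?I ! i)) = (\<Sum>i \<in> S. 1 / real K)"
        by (rule sum.cong) (use S(1) in auto)
      also have "\<dots> = 1" using S(2) K by simp
      finally show "(\<Sum>i \<in> {i. present ?I i t \<and> (0::nat) = j}. sz (?I ! i)) \<le> 1" using e by simp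
    qed
    then show ?thesis using b by simp
  next
    case c
    have "opt_at ?I t \<le> 0"
      by (rule opt_le[where f = "\<lambda>i. 0"]) (use c T in \<open>auto simp: present_inst split: if_splits\<close>)
    then show ?thesis using c by auto
  qed
qed

lemma OPT_inst:
  assumes K: "K \<ge> 1" and S: "S \<subseteq> {..<N}" "card S = K" and T: "T > 1"
  shows "OPT (inst K N T S) \<le> ennreal (real N + (T - 1))"
proof -
  have "OPT (inst K N T S) \<le> (\<integral>\<^sup>+ t. ennreal (real N) * indicator {0..<1} t + indicator {1..<T} t \<partial>lborel)"
    unfolding OPT_def
  proof (rule nn_integral_mono)
    fix t
    show "ennreal (real (opt_at (inst K N T S) t)) \<le> ennreal (real N) * indicator {0..<1} t + indicator {1..<T} t"
      using opt_at_inst[OF assms, of t] T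
      by (auto simp: indicator_def split: if_splits)
  qed
  also have "\<dots> = ennreal (real N) + ennreal (T - 1)"
  proof -
    have 1: "(\<integral>\<^sup>+ t. indicator {0..<1::real} t \<partial>lborel) = 1"
      by (subst nn_integral_indicator) auto
    have 2: "(\<integral>\<^sup>+ t. indicator {1..<T} t \<partial>lborel) = ennreal (T - 1)"
      using T by (subst nn_integral_indicator) auto
    show ?thesis
      by (subst nn_integral_add) (auto simp: nn_integral_cmult 1 2 simp del: nn_integral_indicator)
  qed
  also have "\<dots> = ennreal (real N + (T - 1))"
    using T by (simp add: ennreal_plus)
  finally show ?thesis .
qed

lemma mig_nonneg: "valid_instance I \<Longrightarrow> 0 \<le> migration_cost I Sc"
  unfolding migration_cost_def valid_instance_def
  by (intro sum_nonneg mult_nonneg_nonneg) (auto simp: nth_mem)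

lemma cost_inst:
  assumes K: "K \<ge> 1" and S: "S \<subseteq> {..<N}" and T: "T > 1"
    and V: "valid_schedule (inst K N T S) Sc"
  shows "ennreal ((T - 1) * real (card ((\<lambda>i. fst (Sc i)) ` S)))
           \<le> cost (inst K N T S) Sc + ennreal ((T - 1) * real K * migration_cost (inst K N T S) Sc)"
proof -
  let ?I = "inst K N T S"
  let ?c = "\<lambda>i. fst (Sc i)"
  define U where "U = {i\<in>S. snd (Sc i) = []}"
  define m where "m = migration_cost ?I Sc"
  define h where "h = real (card (?c ` S))"
  have finS: "finite S" using S finite_subset by blast
  have m0: "0 \<le> m" unfolding m_def using T by (intro mig_nonneg valid_inst) simp
  have "real (card (S - U)) / real K = (\<Sum>i\<in>S - U. 1 / real K)" by simp
  also have "\<dots> \<le> (\<Sum>i\<in>S - U. sz (?I ! i) * real (length (snd (Sc i))))"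
  proof (rule sum_mono)
    fix i assume i: "i \<in> S - U"
    then have "i < N" "snd (Sc i) \<noteq> []" using S by (auto simp: U_def)
    then show "1 / real K \<le> sz (?I ! i) * real (length (snd (Sc i)))"
      using K by (cases "snd (Sc i)") (auto simp: divide_right_mono)
  qed
  also have "\<dots> \<le> m"
    unfolding m_def migration_cost_def
    by (rule sum_mono2) (use S in auto)
  finally have mU: "real (card (S - U)) \<le> real K * m"
    using K by (simp add: field_simps)
  have hU: "h \<le> real (card (?c ` U)) + real (card (S - U))"
  proof -
    have "?c ` S = ?c ` U \<union> ?c ` (S - U)" unfolding U_def by auto
    then have "card (?c ` S) \<le> card (?c ` U) + card (?c ` (S - U))" by (metis card_Un_le)
    also have "\<dots> \<le> card (?c ` U) + card (S - U)" using card_image_le[of "S - U" ?c] finS by auto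
    finally show ?thesis unfolding h_def by linarith
  qed
  have pt: "ennreal (max (h - real K * m) 0) * indicator {1..<T} t \<le> ennreal (real (nonempty_bins ?I Sc t))" for t
  proof (cases "1 \<le> t \<and> t < T")
    case True
    then have P: "{i. present ?I i t} = S" using present_set_mid[OF S] by auto
    have "?c ` U \<subseteq> (\<lambda>i. bin_of Sc i t) ` S"
    proof
      fix b assume "b \<in> ?c ` U"
      then obtain i where "i \<in> U" "b = ?c i" by auto
      then have "bin_of Sc i t = b" "i \<in> S" by (auto simp: U_def bin_of_def)
      then show "b \<in> (\<lambda>i. bin_of Sc i t) ` S" by force
    qed
    then have "card (?c ` U) \<le> card ((\<lambda>i. bin_of Sc i t) ` S)"
      using finS by (intro card_mono) auto
    then have "real (card (?c ` U)) \<le> real (nonempty_bins ?I Sc t)"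
      unfolding nonempty_bins_def P by simp
    then have "max (h - real K * m) 0 \<le> real (nonempty_bins ?I Sc t)"
      using hU mU by auto
    then show ?thesis using True by (simp add: indicator_def)
  next
    case False
    then have "indicator {1..<T} t = (0::ennreal)" by (simp add: indicator_def)
    then show ?thesis by simp
  qed
  have "ennreal (max (h - real K * m) 0) * ennreal (T - 1)
      = (\<integral>\<^sup>+ t. ennreal (max (h - real K * m) 0) * indicator {1..<T} t \<partial>lborel)"
    using T by (subst nn_integral_cmult) auto
  also have "\<dots> \<le> cost ?I Sc"
    unfolding cost_def by (rule nn_integral_mono) (rule pt)
  finally have C: "ennreal ((T - 1) * max (h - real K * m) 0) \<le> cost ?I Sc"
    using T by (simp add: ennreal_mult mult.commute)
  have "(T - 1) * h \<le> (T - 1) * max (h - real K * m) 0 + (T - 1) * real K * m"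
  proof -
    have "h \<le> max (h - real K * m) 0 + real K * m" by linarith
    then have "(T - 1) * h \<le> (T - 1) * (max (h - real K * m) 0 + real K * m)"
      using T by (intro mult_left_mono) auto
    then show ?thesis by (simp add: algebra_simps)
  qed
  then have "ennreal ((T - 1) * h) \<le> ennreal ((T - 1) * max (h - real K * m) 0 + (T - 1) * real K * m)"
    by (rule ennreal_leI)
  also have "\<dots> = ennreal ((T - 1) * max (h - real K * m) 0) + ennreal ((T - 1) * real K * m)"
    using T m0 by (intro ennreal_plus) auto
  also have "\<dots> \<le> cost ?I Sc + ennreal ((T - 1) * real K * m)"
    using C by (rule add_right_mono)
  finally show ?thesis unfolding h_def m_def .
qed


lemma h_ge:
  fixes c :: "nat \<Rightarrow> nat"
  assumes "finite S"
  shows "card S \<le> card (c ` S) + card {p \<in> S \<times> S. fst p < snd p \<and> c (fst p) = c (snd p)}"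
  using assms
proof (induction S rule: finite_linorder_max_induct)
  case empty
  then show ?case by simp
next
  case (insert b A)
  let ?P = "\<lambda>A. {p \<in> A \<times> A. fst p < snd p \<and> c (fst p) = c (snd p)}"
  have bA: "b \<notin> A" using insert.hyps(2) by auto
  have finP: "finite (?P (insert b A))"
    by (rule finite_subset[of _ "insert b A \<times> insert b A"]) (use insert.hyps(1) in auto)
  have sub: "?P A \<subseteq> ?P (insert b A)" by auto
  have cI: "card (insert b A) = Suc (card A)" using bA insert.hyps(1) by simp
  show ?case
  proof (cases "c b \<in> c ` A")
    case True
    then obtain a where a: "a \<in> A" "c a = c b" by auto
    then have "a < b" using insert.hyps(2) by auto
    then have "(a, b) \<in> ?P (insert b A) - ?P A" using a bA by auto
    then have "?P A \<subset> ?P (insert b A)" using sub by blast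
    then have "card (?P A) < card (?P (insert b A))" by (rule psubset_card_mono[OF finP])
    moreover have "card (c ` insert b A) = card (c ` A)" using True by (simp add: insert_absorb)
    ultimately show "card (insert b A) \<le> card (c ` insert b A) + card (?P (insert b A))"
      using insert.IH cI by linarith
  next
    case False
    have "card (c ` insert b A) = Suc (card (c ` A))" using False insert.hyps(1) by simp
    moreover have "card (?P A) \<le> card (?P (insert b A))" using finP sub by (rule card_mono)
    ultimately show "card (insert b A) \<le> card (c ` insert b A) + card (?P (insert b A))"
      using insert.IH cI by linarith
  qed
qed
lemma card_pairs_subsets:
  assumes "finite A" "i \<in> A" "j \<in> A" "i \<noteq> j" "2 \<le> k"
  shows "card {S. S \<subseteq> A \<and> card S = k \<and> i \<in> S \<and> j \<in> S} = (card A - 2) choose (k - 2)"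
proof -
  let ?L = "{S. S \<subseteq> A \<and> card S = k \<and> i \<in> S \<and> j \<in> S}"
  let ?R = "{S. S \<subseteq> A - {i, j} \<and> card S = k - 2}"
  let ?f = "\<lambda>S. insert i (insert j S)"
  have inj: "inj_on ?f ?R"
  proof (rule inj_onI)
    fix X Y assume "X \<in> ?R" "Y \<in> ?R" "?f X = ?f Y"
    then show "X = Y" by blast
  qed
  have img: "?f ` ?R = ?L"
  proof
    show "?f ` ?R \<subseteq> ?L"
    proof
      fix S assume "S \<in> ?f ` ?R"
      then obtain X where X: "X \<subseteq> A - {i, j}" "card X = k - 2" "S = ?f X" by auto
      have "finite X" using X(1) assms(1) finite_subset by blast
      then have "card S = k" using X assms by (auto simp: card_insert_if)
      then show "S \<in> ?L" using X assms by auto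
    qed
  next
    show "?L \<subseteq> ?f ` ?R"
    proof
      fix S assume S: "S \<in> ?L"
      have finS: "finite S" using S assms(1) finite_subset by blast
      have "card (S - {i, j}) = k - 2" using S finS assms(4) by (simp add: card_Diff_subset)
      moreover have "S = ?f (S - {i, j})" using S by auto
      ultimately show "S \<in> ?f ` ?R" using S by blast
    qed
  qed
  have "card ?L = card ?R" using card_image[OF inj] img by simp
  also have "\<dots> = card (A - {i, j}) choose (k - 2)"
    using assms(1) by (intro n_subsets) simp
  also have "card (A - {i, j}) = card A - 2" using assms by (simp add: card_Diff_subset)
  finally show ?thesis .
qed

lemma pair_count:
  assumes "i \<noteq> j" "i < N" "j < N"
  shows "card {S. S \<subseteq> {..<N} \<and> card S = K \<and> i \<in> S \<and> j \<in> S} * (N * (N - 1)) = (N choose K) * (K * (K - 1))"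
proof (cases "K < 2")
  case True
  have e: "{S. S \<subseteq> {..<N} \<and> card S = K \<and> i \<in> S \<and> j \<in> S} = {}"
  proof (rule ccontr)
    assume "\<not> ?thesis"
    then obtain S where S: "S \<subseteq> {..<N}" "card S = K" "i \<in> S" "j \<in> S" by auto
    have "finite S" using S(1) finite_subset by blast
    then have "card {i, j} \<le> card S" using S by (intro card_mono) auto
    then show False using True S assms by simp
  qed
  have "K * (K - 1) = 0" using True by (cases K) auto
  then show ?thesis unfolding e by simp
next
  case False
  define k where "k = K - 2"
  have k: "K = k + 2" using False k_def by simp
  have N2: "2 \<le> N" using assms by linarith
  define n where "n = N - 2"
  have n: "N = n + 2" using N2 n_def by simp
  have c: "card {S. S \<subseteq> {..<N} \<and> card S = K \<and> i \<in> S \<and> j \<in> S} = n choose k"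
    using card_pairs_subsets[of "{..<N}" i j K] assms False k n by simp
  have e1: "Suc n * (n choose k) = (Suc n choose Suc k) * Suc k" by (rule Suc_times_binomial_eq)
  have e2: "Suc (Suc n) * (Suc n choose Suc k) = (Suc (Suc n) choose Suc (Suc k)) * Suc (Suc k)" by (rule Suc_times_binomial_eq)
  have "(n choose k) * ((n + 2) * (n + 1)) = (n + 2) * (Suc n * (n choose k))" by (simp add: algebra_simps)
  also have "\<dots> = (Suc (Suc n) * (Suc n choose Suc k)) * Suc k" unfolding e1 by (simp add: algebra_simps)
  also have "\<dots> = (Suc (Suc n) choose Suc (Suc k)) * Suc (Suc k) * Suc k" unfolding e2 by simp
  finally show ?thesis unfolding c using k n by (simp add: algebra_simps)
qed

lemma pairs_bound:
  fixes c :: "nat \<Rightarrow> nat"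
  assumes cap: "\<And>b. card {i\<in>{..<N}. c i = b} \<le> K"
  shows "2 * card {p \<in> {..<N} \<times> {..<N}. fst p < snd p \<and> c (fst p) = c (snd p)} \<le> N * (K - 1)"
proof -
  let ?P = "{p \<in> {..<N} \<times> {..<N}. fst p < snd p \<and> c (fst p) = c (snd p)}"
  let ?Q = "{p \<in> {..<N} \<times> {..<N}. snd p < fst p \<and> c (fst p) = c (snd p)}"
  let ?D = "Sigma {..<N} (\<lambda>i. {j \<in> {..<N}. j \<noteq> i \<and> c j = c i})"
  have img: "prod.swap ` ?P = ?Q"
  proof (rule set_eqI)
    fix p :: "nat \<times> nat"
    obtain a b where p: "p = (a, b)" by (cases p)
    have "p \<in> prod.swap ` ?P \<longleftrightarrow> (b, a) \<in> ?P"
      unfolding p by (rule pair_in_swap_image)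
    then show "p \<in> prod.swap ` ?P \<longleftrightarrow> p \<in> ?Q" unfolding p by auto
  qed
  have cQ: "card ?Q = card ?P" unfolding img[symmetric] by (rule card_image) simp
  have U: "?P \<union> ?Q = ?D"
  proof (rule set_eqI)
    fix p :: "nat \<times> nat"
    obtain a b where p: "p = (a, b)" by (cases p)
    show "p \<in> ?P \<union> ?Q \<longleftrightarrow> p \<in> ?D" unfolding p by auto
  qed
  have dj: "?P \<inter> ?Q = {}" by auto
  have f1: "finite ?P" by (rule finite_subset[of _ "{..<N} \<times> {..<N}"]) auto
  have f2: "finite ?Q" by (rule finite_subset[of _ "{..<N} \<times> {..<N}"]) auto
  have "card (?P \<union> ?Q) = card ?P + card ?Q" by (rule card_Un_disjoint[OF f1 f2 dj])
  then have DA: "card ?D = card ?P + card ?Q" unfolding U .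
  have DB: "card ?D = (\<Sum>i<N. card {j \<in> {..<N}. j \<noteq> i \<and> c j = c i})"
    by (rule card_SigmaI) auto
  have DC: "(\<Sum>i<N. card {j \<in> {..<N}. j \<noteq> i \<and> c j = c i}) \<le> (\<Sum>i<N. K - 1)"
  proof (rule sum_mono)
    fix i assume i: "i \<in> {..<N}"
    have e: "{j \<in> {..<N}. j \<noteq> i \<and> c j = c i} = {j\<in>{..<N}. c j = c i} - {i}" by auto
    have "i \<in> {j\<in>{..<N}. c j = c i}" using i by auto
    then have "card ({j\<in>{..<N}. c j = c i} - {i}) = card {j\<in>{..<N}. c j = c i} - 1"
      by (intro card_Diff_singleton) auto
    then show "card {j \<in> {..<N}. j \<noteq> i \<and> c j = c i} \<le> K - 1" using cap[of "c i"] unfolding e by linarith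
  qed
  have "(\<Sum>i<N. K - 1) = N * (K - 1)" by simp
  then show ?thesis using DA DB DC cQ by linarith
qed

lemma comb:
  fixes c :: "nat \<Rightarrow> nat"
  assumes K: "K \<ge> 1" and cap: "\<And>b. card {i\<in>{..<K*K}. c i = b} \<le> K"
  shows "real (card {S. S \<subseteq> {..<K*K} \<and> card S = K}) * (real K - real K * (real K - 1) / (2 * (real K + 1)))
           \<le> (\<Sum>S\<in>{S. S \<subseteq> {..<K*K} \<and> card S = K}. real (card (c ` S)))"
proof -
  define N where "N = K * K"
  define F where "F = {S. S \<subseteq> {..<N} \<and> card S = K}"
  define Pairs where "Pairs = {p \<in> {..<N} \<times> {..<N}. fst p < snd p \<and> c (fst p) = c (snd p)}"
  define PS where "PS S = {p \<in> S \<times> S. fst p < snd p \<and> c (fst p) = c (snd p)}" for S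
  define X where "X = (\<Sum>S\<in>F. card (PS S))"
  have finF: "finite F" unfolding F_def by (rule finite_subset[of _ "Pow {..<N}"]) auto
  have finPairs: "finite Pairs" unfolding Pairs_def by (rule finite_subset[of _ "{..<N} \<times> {..<N}"]) auto
  have cF: "card F = N choose K" unfolding F_def using n_subsets[of "{..<N}" K] by simp
  have h1: "real K \<le> real (card (c ` S)) + real (card (PS S))" if "S \<in> F" for S
  proof -
    have "finite S" using that unfolding F_def using finite_subset by blast
    then have "card S \<le> card (c ` S) + card (PS S)" unfolding PS_def by (rule h_ge)
    then show ?thesis using that unfolding F_def by simp
  qed
  have PSeq: "card (PS S) = (\<Sum>p\<in>Pairs. if fst p \<in> S \<and> snd p \<in> S then 1 else 0)" if "S \<in> F" for S
  proof -
    have "PS S = {p\<in>Pairs. fst p \<in> S \<and> snd p \<in> S}"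
      using that unfolding PS_def Pairs_def F_def by auto
    then have "card (PS S) = (\<Sum>p\<in>{p\<in>Pairs. fst p \<in> S \<and> snd p \<in> S}. 1)" by simp
    also have "\<dots> = (\<Sum>p\<in>Pairs. if fst p \<in> S \<and> snd p \<in> S then 1 else 0)"
      by (rule sum.inter_filter[OF finPairs])
    finally show ?thesis .
  qed
  have XP: "X = (\<Sum>p\<in>Pairs. card {S\<in>F. fst p \<in> S \<and> snd p \<in> S})"
  proof -
    have "X = (\<Sum>S\<in>F. \<Sum>p\<in>Pairs. if fst p \<in> S \<and> snd p \<in> S then 1 else 0)"
      unfolding X_def by (rule sum.cong) (auto simp: PSeq)
    also have "\<dots> = (\<Sum>p\<in>Pairs. \<Sum>S\<in>F. if fst p \<in> S \<and> snd p \<in> S then 1 else 0)"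
      by (rule sum.swap)
    also have "\<dots> = (\<Sum>p\<in>Pairs. card {S\<in>F. fst p \<in> S \<and> snd p \<in> S})"
    proof (rule sum.cong)
      fix p assume "p \<in> Pairs"
      have "card {S\<in>F. fst p \<in> S \<and> snd p \<in> S} = (\<Sum>S\<in>{S\<in>F. fst p \<in> S \<and> snd p \<in> S}. 1)" by simp
      also have "\<dots> = (\<Sum>S\<in>F. if fst p \<in> S \<and> snd p \<in> S then 1 else 0)"
        by (rule sum.inter_filter[OF finF])
      finally show "(\<Sum>S\<in>F. if fst p \<in> S \<and> snd p \<in> S then 1 else 0) = card {S\<in>F. fst p \<in> S \<and> snd p \<in> S}" by simp
    qed simp
    finally show ?thesis .
  qed
  have XN: "X * (N * (N - 1)) = card Pairs * (card F * (K * (K - 1)))"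
  proof -
    have "X * (N * (N - 1)) = (\<Sum>p\<in>Pairs. card {S\<in>F. fst p \<in> S \<and> snd p \<in> S} * (N * (N - 1)))"
      unfolding XP by (rule sum_distrib_right)
    also have "\<dots> = (\<Sum>p\<in>Pairs. card F * (K * (K - 1)))"
    proof (rule sum.cong)
      fix p assume p: "p \<in> Pairs"
      have "{S\<in>F. fst p \<in> S \<and> snd p \<in> S} = {S. S \<subseteq> {..<N} \<and> card S = K \<and> fst p \<in> S \<and> snd p \<in> S}"
        unfolding F_def by auto
      moreover have "fst p \<noteq> snd p" "fst p < N" "snd p < N" using p unfolding Pairs_def by auto
      ultimately show "card {S\<in>F. fst p \<in> S \<and> snd p \<in> S} * (N * (N - 1)) = card F * (K * (K - 1))"
        using pair_count cF by simp
    qed simp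
    also have "\<dots> = card Pairs * (card F * (K * (K - 1)))" by simp
    finally show ?thesis .
  qed
  have PB: "2 * card Pairs \<le> N * (K - 1)"
    unfolding Pairs_def N_def using pairs_bound[where N="K*K" and K=K and c=c] cap by simp
  have Xb: "real X \<le> real (card F) * (real K * (real K - 1) / (2 * (real K + 1)))"
  proof (cases "K = 1")
    case True
    then have "card Pairs = 0" using PB by simp
    then have "Pairs = {}" using finPairs by simp
    then have "X = 0" unfolding XP by simp
    then show ?thesis using K by simp
  next
    case False
    then have K2: "K \<ge> 2" using K by simp
    have "2 * X * (N * (N - 1)) \<le> N * (K - 1) * (card F * (K * (K - 1)))"
      using XN PB by (metis mult.assoc mult_le_mono1)
    then have "real (2 * X * (N * (N - 1))) \<le> real (N * (K - 1) * (card F * (K * (K - 1))))"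
      by (simp only: of_nat_le_iff)
    then have R: "2 * real X * (real K * real K * (real K * real K - 1)) \<le> real K * real K * (real K - 1) * (real (card F) * (real K * (real K - 1)))"
      using K2 unfolding N_def by (simp add: of_nat_diff)
    define k where "k = real K"
    have k2: "k \<ge> 2" using K2 unfolding k_def by simp
    have R': "(k * k * (k - 1)) * (2 * real X * (k + 1)) \<le> (k * k * (k - 1)) * (real (card F) * (k * (k - 1)))"
      using R unfolding k_def[symmetric] by (simp add: algebra_simps)
    have pos: "k * k * (k - 1) > 0" using k2 by simp
    have "2 * real X * (k + 1) \<le> real (card F) * (k * (k - 1))"
      using R' pos by (simp add: mult_le_cancel_left_pos)
    then show ?thesis using k2 unfolding k_def[symmetric] by (simp add: field_simps)
  qed
  have "real (card F) * real K - real X \<le> (\<Sum>S\<in>F. real (card (c ` S)))"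
  proof -
    have "real (card F) * real K = (\<Sum>S\<in>F. real K)" by simp
    also have "\<dots> \<le> (\<Sum>S\<in>F. real (card (c ` S)) + real (card (PS S)))"
      by (rule sum_mono) (rule h1)
    also have "\<dots> = (\<Sum>S\<in>F. real (card (c ` S))) + real X"
      unfolding X_def by (simp add: sum.distrib)
    finally show ?thesis by simp
  qed
  then show ?thesis using Xb unfolding F_def N_def by (simp add: algebra_simps)
qed


lemma capacity:
  assumes K: "K \<ge> 1" and T: "T > 0" and V: "valid_schedule (inst K N T {}) Sc"
  shows "card {i\<in>{..<N}. fst (Sc i) = b} \<le> K"
proof -
  let ?I = "inst K N T {}"
  have "(\<Sum>i \<in> {i. present ?I i 0 \<and> bin_of Sc i 0 = b}. sz (?I ! i)) \<le> 1"
    using V unfolding valid_schedule_def by blast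
  moreover have "{i. present ?I i 0 \<and> bin_of Sc i 0 = b} = {i\<in>{..<N}. fst (Sc i) = b}"
  proof (rule set_eqI)
    fix i
    have "i < N \<Longrightarrow> bin_of Sc i 0 = fst (Sc i)"
    proof -
      assume i: "i < N"
      have "\<forall>m\<in>set (snd (Sc i)). \<not> fst m \<le> 0"
        using V i unfolding valid_schedule_def by fastforce
      then show ?thesis unfolding bin_of_def by (rule foldl_keep)
    qed
    then show "i \<in> {i. present ?I i 0 \<and> bin_of Sc i 0 = b} \<longleftrightarrow> i \<in> {i\<in>{..<N}. fst (Sc i) = b}"
      by (auto simp: present_inst)
  qed
  moreover have "(\<Sum>i \<in> {i\<in>{..<N}. fst (Sc i) = b}. sz (?I ! i)) = real (card {i\<in>{..<N}. fst (Sc i) = b}) / real K"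
    by simp
  ultimately have "real (card {i\<in>{..<N}. fst (Sc i) = b}) / real K \<le> 1" by simp
  then show ?thesis using K by (simp add: field_simps)
qed

lemma online_fst:
  assumes "online Al" "T > 0" "T' > 0" "i < N"
  shows "fst (Al (inst K N T S) i) = fst (Al (inst K N T' S') i)"
proof -
  have "view (inst K N T S) 0 = view (inst K N T' S') 0" using assms by (simp add: view0)
  moreover have "length (view (inst K N T S) 0) = N" using assms by (simp add: view0)
  ultimately show ?thesis using assms valid_inst unfolding online_def by metis
qed

lemma total_size_inst: "total_size (inst K N T S) = real N / real K"
  unfolding total_size_def by simp

lemma cost_pos:
  assumes S: "S \<subseteq> {..<N}" "S \<noteq> {}" and T: "T > 1"
  shows "ennreal (T - 1) \<le> cost (inst K N T S) Sc"
proof -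
  have "ennreal (T - 1) = (\<integral>\<^sup>+ t. indicator {1..<T} t \<partial>lborel)"
    using T by simp
  also have "\<dots> \<le> cost (inst K N T S) Sc"
    unfolding cost_def
  proof (rule nn_integral_mono)
    fix t
    show "indicator {1..<T} t \<le> ennreal (real (nonempty_bins (inst K N T S) Sc t))"
    proof (cases "1 \<le> t \<and> t < T")
      case True
      then have P: "{i. present (inst K N T S) i t} = S" using present_set_mid[OF S(1)] by auto
      have "finite S" using S(1) finite_subset by blast
      then have "card ((\<lambda>i. bin_of Sc i t) ` S) \<ge> 1" using S(2)
        by (simp add: Suc_leI card_gt_0_iff)
      then show ?thesis unfolding nonempty_bins_def P using True by (simp add: indicator_def)
    next
      case False
      then have "indicator {1..<T} t = (0::ennreal)" by (simp add: indicator_def)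
      then show ?thesis by simp
    qed
  qed
  finally show ?thesis .
qed



lemma final_arith:
  fixes k b a f :: real
  assumes k: "k \<ge> 1" and b0: "0 \<le> b" and bk: "b < k / 4" and a: "a * k \<le> 1 / 4" and f: "f > 0"
  and H: "f * ((k * k * (k + 1)) * (k - k * (k - 1) / (2 * (k + 1))))
          \<le> f * (b * (k * k + k * k * (k + 1)) + (k * k * (k + 1)) * k * (a * (k * k) / k))"
  shows False
proof -
  define t where "t = k * k * (k + 1)"
  have t0: "t > 0" using k unfolding t_def by simp
  have H1: "t * (k - k * (k - 1) / (2 * (k + 1))) \<le> b * (k * k + t) + t * k * (a * (k * k) / k)"
    using H f unfolding t_def[symmetric] by (simp only: mult_le_cancel_left_pos)
  have e1: "k - k * (k - 1) / (2 * (k + 1)) = k / 2 + k / (k + 1)"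
    using k by (simp add: field_simps)
  have e2: "a * (k * k) / k = a * k" using k by simp
  have i1: "t * k * (a * k) \<le> t * k * (1/4)" using a t0 k by (intro mult_left_mono) auto
  have e3: "t * (k / 2 + k / (k + 1)) = (t * k) * (1/2) + t * (k / (k + 1))" by (simp add: algebra_simps)
  have e4: "t * (k / (k + 1)) = k * k * k" unfolding t_def using k by (simp add: field_simps)
  have e5: "b * (k * k + t) = b * (k * k) + b * t" by (simp add: algebra_simps)
  have i2: "b * t \<le> (k / 4) * t" using bk t0 by (intro mult_right_mono) auto
  have e6: "(k / 4) * t = (t * k) * (1/4)" by simp
  have i3: "b * (k * k) < k * k * k"
  proof -
    have "b < k" using bk k by linarith
    then show ?thesis using k by (simp add: mult_strict_right_mono)
  qed
  have "t * (k / 2 + k / (k + 1)) \<le> b * (k * k + t) + t * k * (a * k)"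
    using H1 unfolding e1 e2 .
  then have "(t * k) * (1/2) + k * k * k \<le> b * (k * k) + b * t + t * k * (a * k)"
    unfolding e3 e4 e5 .
  then show False using i1 i2 e6 i3 t0 by linarith
qed



theorem theorem23:
  fixes M :: "'w measure" and A :: "'w \<Rightarrow> binst \<Rightarrow> schedule" and \<alpha> :: real
  assumes "0 < \<alpha>" and "\<alpha> < 1"
    and "randomized_alg M A"
    and "\<forall>I. valid_instance I \<longrightarrow> exp_migration M A I \<le> ennreal (\<alpha> * total_size I)"
  shows "\<forall>\<beta> < (1/4) * real_of_int \<lfloor>1 / (4 * \<alpha>)\<rfloor>.
           \<exists>I. valid_instance I \<and> ennreal \<beta> * OPT I < exp_cost M A I"
proof (intro allI impI)
  fix \<beta> :: real
  assume hb: "\<beta> < (1/4) * real_of_int \<lfloor>1 / (4 * \<alpha>)\<rfloor>"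
  have a0: "0 < \<alpha>" by fact
  have PS: "prob_space M" using assms(3) unfolding randomized_alg_def by blast
  have ALG: "\<And>\<omega>. \<omega> \<in> space M \<Longrightarrow> online (A \<omega>) \<and> (\<forall>I. valid_instance I \<longrightarrow> valid_schedule I (A \<omega> I))"
    using assms(3) unfolding randomized_alg_def by blast
  have MEAS: "\<And>I. valid_instance I \<Longrightarrow> (\<lambda>\<omega>. cost I (A \<omega> I)) \<in> borel_measurable M \<and>
        (\<lambda>\<omega>. ennreal (migration_cost I (A \<omega> I))) \<in> borel_measurable M"
    using assms(3) unfolding randomized_alg_def by blast
  have sp1: "emeasure M (space M) = 1" using PS by (simp add: prob_space.emeasure_space_1)
  define K where "K = nat \<lfloor>1 / (4 * \<alpha>)\<rfloor>"
  have fl0: "\<lfloor>1 / (4 * \<alpha>)\<rfloor> \<ge> 0" using a0 by simp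
  have Kr: "real K = real_of_int \<lfloor>1 / (4 * \<alpha>)\<rfloor>" unfolding K_def using fl0 by simp
  have Kle: "real K \<le> 1 / (4 * \<alpha>)" unfolding Kr by simp
  have aK: "\<alpha> * real K \<le> 1 / 4"
  proof -
    have "\<alpha> * real K \<le> \<alpha> * (1 / (4 * \<alpha>))" using Kle a0 by (intro mult_left_mono) auto
    also have "\<dots> = 1 / 4" using a0 by simp
    finally show ?thesis .
  qed
  have hbK: "\<beta> < real K / 4" using hb Kr by simp
  show "\<exists>I. valid_instance I \<and> ennreal \<beta> * OPT I < exp_cost M A I"
  proof (cases "K = 0")
    case True
    let ?I = "inst 1 1 2 {0}"
    have vI: "valid_instance ?I" by (rule valid_inst) simp
    have "ennreal \<beta> = 0" using hbK True by (intro ennreal_neg) simp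
    moreover have "exp_cost M A ?I \<ge> 1"
    proof -
      have "(1::ennreal) = (\<integral>\<^sup>+ \<omega>. 1 \<partial>M)" using sp1 by simp
      also have "\<dots> \<le> exp_cost M A ?I"
        unfolding exp_cost_def
      proof (rule nn_integral_mono)
        fix \<omega> assume "\<omega> \<in> space M"
        have "ennreal (2 - 1) \<le> cost ?I (A \<omega> ?I)" by (rule cost_pos) auto
        then show "1 \<le> cost ?I (A \<omega> ?I)" by simp
      qed
      finally show ?thesis .
    qed
    then have "0 < exp_cost M A ?I" using zero_less_one order_less_le_trans by blast
    ultimately show ?thesis using vI by (intro exI[of _ ?I]) auto
  next
    case False
    then have K1: "K \<ge> 1" by simp
    define N where "N = K * K"
    define T where "T = 1 + real K * real K * (real K + 1)"
    define F where "F = {S. S \<subseteq> {..<N} \<and> card S = K}"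
    define \<beta>' where "\<beta>' = max \<beta> 0"
    define C where "C = real K - real K * (real K - 1) / (2 * (real K + 1))"
    define I where "I S = inst K N T S" for S
    have T1: "T > 1" unfolding T_def using K1 by simp
    have vI: "valid_instance (I S)" for S unfolding I_def by (rule valid_inst) (use T1 in simp)
    have finF: "finite F" unfolding F_def by (rule finite_subset[of _ "Pow {..<N}"]) auto
    have cF: "card F = N choose K" unfolding F_def using n_subsets[of "{..<N}" K] by simp
    have cF0: "card F > 0" unfolding cF N_def using K1 by (simp add: zero_less_binomial_iff)
    show ?thesis
    proof (rule ccontr)
      assume nex: "\<not> (\<exists>I. valid_instance I \<and> ennreal \<beta> * OPT I < exp_cost M A I)"
      have H: "exp_cost M A (I S) \<le> ennreal (\<beta>' * (real N + (T - 1)))" if "S \<in> F" for S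
      proof -
        have "exp_cost M A (I S) \<le> ennreal \<beta> * OPT (I S)" using nex vI by (meson not_less)
        also have "\<dots> \<le> ennreal \<beta>' * ennreal (real N + (T - 1))"
        proof (rule mult_mono)
          show "ennreal \<beta> \<le> ennreal \<beta>'" unfolding \<beta>'_def by (rule ennreal_leI) simp
          show "OPT (I S) \<le> ennreal (real N + (T - 1))"
            unfolding I_def by (rule OPT_inst) (use K1 that T1 in \<open>auto simp: F_def\<close>)
        qed auto
        also have "\<dots> = ennreal (\<beta>' * (real N + (T - 1)))"
          using T1 by (simp add: ennreal_mult \<beta>'_def)
        finally show ?thesis .
      qed
      have HM: "exp_migration M A (I S) \<le> ennreal (\<alpha> * (real N / real K))" for S
      proof -
        have "exp_migration M A (I S) \<le> ennreal (\<alpha> * total_size (I S))" using assms(4) vI[of S] by blast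
        then show ?thesis unfolding I_def total_size_inst .
      qed
      define cst where "cst \<omega> S = cost (I S) (A \<omega> (I S))" for \<omega> S
      define mg where "mg \<omega> S = ennreal (migration_cost (I S) (A \<omega> (I S)))" for \<omega> S
      have PW: "ennreal ((T - 1) * (real (card F) * C))
                 \<le> (\<Sum>S\<in>F. cst \<omega> S) + ennreal ((T - 1) * real K) * (\<Sum>S\<in>F. mg \<omega> S)"
        if \<omega>: "\<omega> \<in> space M" for \<omega>
      proof -
        define c where "c i = fst (A \<omega> (I {}) i)" for i
        have on: "online (A \<omega>)" using ALG \<omega> by blast
        have vs: "valid_schedule (I S) (A \<omega> (I S))" for S using ALG \<omega> vI by blast
        have cap: "card {i\<in>{..<K*K}. c i = b} \<le> K" for b
          using capacity[OF K1, of T N "A \<omega> (I {})" b] vs[of "{}"] T1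
          unfolding c_def I_def N_def by simp
        have imgeq: "(\<lambda>i. fst (A \<omega> (I S) i)) ` S = c ` S" if "S \<in> F" for S
        proof (rule image_cong)
          fix i assume "i \<in> S"
          then have "i < N" using that unfolding F_def by auto
          then show "fst (A \<omega> (I S) i) = c i"
            unfolding c_def I_def using online_fst[OF on, of T T i N] T1 by simp
        qed simp
        have "real (card F) * C \<le> (\<Sum>S\<in>F. real (card (c ` S)))"
          using comb[OF K1 cap] unfolding C_def F_def N_def .
        then have "(T - 1) * (real (card F) * C) \<le> (\<Sum>S\<in>F. (T - 1) * real (card (c ` S)))"
          using T1 by (simp add: sum_distrib_left[symmetric] mult_left_mono)
        then have "ennreal ((T - 1) * (real (card F) * C)) \<le> ennreal (\<Sum>S\<in>F. (T - 1) * real (card (c ` S)))"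
          by (rule ennreal_leI)
        also have "\<dots> = (\<Sum>S\<in>F. ennreal ((T - 1) * real (card (c ` S))))"
          using T1 by (subst sum_ennreal) auto
        also have "\<dots> \<le> (\<Sum>S\<in>F. cst \<omega> S + ennreal ((T - 1) * real K) * mg \<omega> S)"
        proof (rule sum_mono)
          fix S assume S: "S \<in> F"
          have "ennreal ((T - 1) * real (card ((\<lambda>i. fst (A \<omega> (I S) i)) ` S)))
             \<le> cost (I S) (A \<omega> (I S)) + ennreal ((T - 1) * real K * migration_cost (I S) (A \<omega> (I S)))"
            unfolding I_def by (rule cost_inst) (use K1 S T1 vs[of S] in \<open>auto simp: F_def I_def\<close>)
          also have "ennreal ((T - 1) * real K * migration_cost (I S) (A \<omega> (I S)))
              = ennreal ((T - 1) * real K) * mg \<omega> S"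
            unfolding mg_def using T1 mig_nonneg[OF vI[of S]] by (intro ennreal_mult) auto
          finally show "ennreal ((T - 1) * real (card (c ` S))) \<le> cst \<omega> S + ennreal ((T - 1) * real K) * mg \<omega> S"
            unfolding cst_def imgeq[OF S] .
        qed
        also have "\<dots> = (\<Sum>S\<in>F. cst \<omega> S) + ennreal ((T - 1) * real K) * (\<Sum>S\<in>F. mg \<omega> S)"
          by (simp add: sum.distrib sum_distrib_left)
        finally show ?thesis .
      qed
      have mc: "(\<lambda>\<omega>. cst \<omega> S) \<in> borel_measurable M" for S
        unfolding cst_def using MEAS[OF vI] by blast
      have mm: "(\<lambda>\<omega>. mg \<omega> S) \<in> borel_measurable M" for S
        unfolding mg_def using MEAS[OF vI] by blast
      have "ennreal ((T - 1) * (real (card F) * C))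
            = (\<integral>\<^sup>+ \<omega>. ennreal ((T - 1) * (real (card F) * C)) \<partial>M)" using sp1 by simp
      also have "\<dots> \<le> (\<integral>\<^sup>+ \<omega>. (\<Sum>S\<in>F. cst \<omega> S) + ennreal ((T - 1) * real K) * (\<Sum>S\<in>F. mg \<omega> S) \<partial>M)"
        by (rule nn_integral_mono) (rule PW)
      also have "\<dots> = (\<Sum>S\<in>F. exp_cost M A (I S)) + ennreal ((T - 1) * real K) * (\<Sum>S\<in>F. exp_migration M A (I S))"
        using mc mm
        by (simp add: nn_integral_add nn_integral_cmult nn_integral_sum exp_cost_def exp_migration_def cst_def mg_def)
      also have "\<dots> \<le> (\<Sum>S\<in>F. ennreal (\<beta>' * (real N + (T - 1)))) + ennreal ((T - 1) * real K) * (\<Sum>S\<in>F. ennreal (\<alpha> * (real N / real K)))"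
        by (intro add_mono mult_left_mono sum_mono H HM) auto
      also have "\<dots> = ennreal (real (card F) * (\<beta>' * (real N + (T - 1))) + (T - 1) * real K * (real (card F) * (\<alpha> * (real N / real K))))"
      proof -
        have x0: "0 \<le> \<beta>' * (real N + (T - 1))" using T1 unfolding \<beta>'_def by simp
        have y0: "0 \<le> \<alpha> * (real N / real K)" using a0 by simp
        have z0: "0 \<le> (T - 1) * real K" using T1 by simp
        have fy0: "0 \<le> real (card F) * (\<alpha> * (real N / real K))" by (rule mult_nonneg_nonneg[OF _ y0]) simp
        have fx0: "0 \<le> real (card F) * (\<beta>' * (real N + (T - 1)))" by (rule mult_nonneg_nonneg[OF _ x0]) simp
        have w0: "0 \<le> (T - 1) * real K * (real (card F) * (\<alpha> * (real N / real K)))" by (rule mult_nonneg_nonneg[OF z0 fy0])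
        have s1: "(\<Sum>S\<in>F. ennreal (\<beta>' * (real N + (T - 1)))) = ennreal (real (card F) * (\<beta>' * (real N + (T - 1))))"
          using x0 by (subst sum_ennreal) auto
        have s2: "(\<Sum>S\<in>F. ennreal (\<alpha> * (real N / real K))) = ennreal (real (card F) * (\<alpha> * (real N / real K)))"
          using y0 by (subst sum_ennreal) auto
        have s3: "ennreal ((T - 1) * real K) * ennreal (real (card F) * (\<alpha> * (real N / real K)))
             = ennreal ((T - 1) * real K * (real (card F) * (\<alpha> * (real N / real K))))"
          by (rule ennreal_mult[symmetric, OF z0 fy0])
        show ?thesis unfolding s1 s2 s3 by (rule ennreal_plus[symmetric, OF fx0 w0])
      qed
      finally have R: "(T - 1) * (real (card F) * C) \<le> real (card F) * (\<beta>' * (real N + (T - 1))) + (T - 1) * real K * (real (card F) * (\<alpha> * (real N / real K)))"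
        using T1 a0 by (subst (asm) ennreal_le_iff) (auto simp: \<beta>'_def)
      show False
      proof (rule final_arith[of "real K" \<beta>' \<alpha> "real (card F)"])
        show "1 \<le> real K" using K1 by simp
        show "0 \<le> \<beta>'" unfolding \<beta>'_def by simp
        show "\<beta>' < real K / 4" unfolding \<beta>'_def using hbK K1 by simp
        show "\<alpha> * real K \<le> 1 / 4" by (rule aK)
        show "0 < real (card F)" using cF0 by simp
        have eT: "T - 1 = real K * real K * (real K + 1)" unfolding T_def by simp
        have eN: "real N = real K * real K" unfolding N_def by simp
        show "real (card F) * (real K * real K * (real K + 1) * (real K - real K * (real K - 1) / (2 * (real K + 1))))
          \<le> real (card F) * (\<beta>' * (real K * real K + real K * real K * (real K + 1)) +
             real K * real K * (real K + 1) * real K * (\<alpha> * (real K * real K) / real K))"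
          using R K1 unfolding eT eN C_def by (simp add: algebra_simps)
      qed
    qed
  qed
qed

end
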